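(* Let $K\subseteq\mathbb{R}^n$ be non-empty and compact. Then every $K$-positivity preserver $T=\sum_{\alpha\in\mathbb{N}_0^n}q_\alpha\partial^\alpha$ with constant coefficients $q_\alpha\in\mathbb{R}$ is of the form $T=c\cdot\mathbb{1}$ for some $c\in[0,\infty)$.
   Context: A linear map $T:\mathbb{R}[x_1,\dots,x_n]\to\mathbb{R}[x_1,\dots,x_n]$ is a $K$-positivity preserver if it maps every polynomial non-negative on $K$ to a polynomial non-negative on $K$. $\mathbb{1}$ denotes the identity map. *)

theory Defs
  imports "HOL-Analysis.Analysis" "HOL-Library.Poly_Mapping"
begin

text \<open>Real polynomials in the variables x_i, i in the finite index type 'n (so n = CARD('n)).
  A monomial exponent alpha in N_0^n is a finitely supported map 'n to nat; a polynomial is a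
  finitely supported map from exponents to real coefficients.\<close>

type_synonym 'n mpoly = "('n \<Rightarrow>\<^sub>0 nat) \<Rightarrow>\<^sub>0 real"

definition mono_eval :: "('n::finite \<Rightarrow>\<^sub>0 nat) \<Rightarrow> real^'n \<Rightarrow> real" where
  "mono_eval \<alpha> x = (\<Prod>i\<in>UNIV. (x $ i) ^ Poly_Mapping.lookup \<alpha> i)"

definition peval :: "'n::finite mpoly \<Rightarrow> real^'n \<Rightarrow> real" where
  "peval p x = (\<Sum>\<alpha>\<in>Poly_Mapping.keys p. Poly_Mapping.lookup p \<alpha> * mono_eval \<alpha> x)"

definition mle :: "('n \<Rightarrow>\<^sub>0 nat) \<Rightarrow> ('n \<Rightarrow>\<^sub>0 nat) \<Rightarrow> bool" where
  "mle \<alpha> \<beta> \<longleftrightarrow> (\<forall>i. Poly_Mapping.lookup \<alpha> i \<le> Poly_Mapping.lookup \<beta> i)"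

definition pscale :: "real \<Rightarrow> 'n mpoly \<Rightarrow> 'n mpoly" where
  "pscale c p = Poly_Mapping.map (\<lambda>a. c * a) p"

text \<open>partial^alpha x^beta = prod_i beta_i!/(beta_i-alpha_i)! x^(beta-alpha) if alpha <= beta, else 0.\<close>
definition pderivm :: "('n::finite \<Rightarrow>\<^sub>0 nat) \<Rightarrow> 'n mpoly \<Rightarrow> 'n mpoly" where
  "pderivm \<alpha> p = (\<Sum>\<beta>\<in>Poly_Mapping.keys p. if mle \<alpha> \<beta> then
      Poly_Mapping.single (\<beta> - \<alpha>)
        (Poly_Mapping.lookup p \<beta> * (\<Prod>i\<in>UNIV. real (fact (Poly_Mapping.lookup \<beta> i)) / real (fact (Poly_Mapping.lookup \<beta> i - Poly_Mapping.lookup \<alpha> i))))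
      else 0)"

text \<open>The constant-coefficient differential operator T = sum_alpha q_alpha partial^alpha,
  applied to p (only the finitely many alpha below some exponent of p contribute).\<close>
definition diffop :: "(('n::finite \<Rightarrow>\<^sub>0 nat) \<Rightarrow> real) \<Rightarrow> 'n mpoly \<Rightarrow> 'n mpoly" where
  "diffop q p = (\<Sum>\<alpha>\<in>{\<alpha>. \<exists>\<beta>\<in>Poly_Mapping.keys p. mle \<alpha> \<beta>}. pscale (q \<alpha>) (pderivm \<alpha> p))"

definition pos_preserver :: "(real^'n) set \<Rightarrow> ('n::finite mpoly \<Rightarrow> 'n mpoly) \<Rightarrow> bool" where
  "pos_preserver K T \<longleftrightarrow>
     (\<forall>p. (\<forall>x\<in>K. peval p x \<ge> 0) \<longrightarrow> (\<forall>x\<in>K. peval (T p) x \<ge> 0))"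

end

theory Submission
  imports Defs "HOL-Computational_Algebra.Polynomial"
begin

lemma lookup_pscale[simp]: "Poly_Mapping.lookup (pscale c p) a = c * Poly_Mapping.lookup p a"
  unfolding pscale_def by (simp add: Poly_Mapping.map.rep_eq when_def)

lemma peval_superset:
  assumes "finite S" "Poly_Mapping.keys p \<subseteq> S"
  shows "peval p x = (\<Sum>\<alpha>\<in>S. Poly_Mapping.lookup p \<alpha> * mono_eval \<alpha> x)"
  unfolding peval_def
  by (rule sum.mono_neutral_left) (use assms in \<open>auto simp: in_keys_iff\<close>)

lemma peval_add: "peval (p + r) x = peval p x + peval r x"
proof -
  let ?S = "Poly_Mapping.keys p \<union> Poly_Mapping.keys r"
  have "peval (p + r) x = (\<Sum>\<alpha>\<in>?S. Poly_Mapping.lookup (p+r) \<alpha> * mono_eval \<alpha> x)"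
    using Poly_Mapping.keys_add[of p r] by (intro peval_superset) auto
  also have "\<dots> = (\<Sum>\<alpha>\<in>?S. Poly_Mapping.lookup p \<alpha> * mono_eval \<alpha> x)
     + (\<Sum>\<alpha>\<in>?S. Poly_Mapping.lookup r \<alpha> * mono_eval \<alpha> x)"
    by (simp add: lookup_add distrib_right sum.distrib)
  also have "\<dots> = peval p x + peval r x"
    by (simp add: peval_superset[symmetric])
  finally show ?thesis .
qed

lemma peval_zero[simp]: "peval 0 x = 0"
  by (simp add: peval_def)

lemma peval_sum: "peval (\<Sum>a\<in>A. f a) x = (\<Sum>a\<in>A. peval (f a) x)"
  by (induction A rule: infinite_finite_induct) (auto simp: peval_add)

lemma peval_pscale: "peval (pscale c p) x = c * peval p x"
proof -
  have "peval (pscale c p) x = (\<Sum>\<alpha>\<in>Poly_Mapping.keys p. Poly_Mapping.lookup (pscale c p) \<alpha> * mono_eval \<alpha> x)"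
    by (rule peval_superset) (auto simp: in_keys_iff)
  then show ?thesis by (simp add: peval_def sum_distrib_left mult.assoc)
qed

lemma peval_single: "peval (Poly_Mapping.single m c) x = c * mono_eval m x"
proof -
  have "peval (Poly_Mapping.single m c) x = (\<Sum>\<alpha>\<in>{m}. Poly_Mapping.lookup (Poly_Mapping.single m c) \<alpha> * mono_eval \<alpha> x)"
    by (rule peval_superset) auto
  then show ?thesis by simp
qed

lemma sum_singles: "(\<Sum>\<beta>\<in>Poly_Mapping.keys p. Poly_Mapping.single \<beta> (Poly_Mapping.lookup p \<beta>)) = p"
proof (rule poly_mapping_eqI)
  fix k
  show "Poly_Mapping.lookup (\<Sum>\<beta>\<in>Poly_Mapping.keys p. Poly_Mapping.single \<beta> (Poly_Mapping.lookup p \<beta>)) k = Poly_Mapping.lookup p k"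
    by (simp add: lookup_sum lookup_single when_def in_keys_iff)
qed

lemma pderivm_zero: "pderivm 0 p = p"
proof -
  have "pderivm 0 p = (\<Sum>\<beta>\<in>Poly_Mapping.keys p. Poly_Mapping.single \<beta> (Poly_Mapping.lookup p \<beta>))"
    unfolding pderivm_def by (intro sum.cong) (auto simp: mle_def)
  then show ?thesis by (simp add: sum_singles)
qed

definition box :: "('n \<Rightarrow>\<^sub>0 nat) \<Rightarrow> ('n \<Rightarrow>\<^sub>0 nat) set" where
  "box \<gamma> = {\<beta>. mle \<beta> \<gamma>}"

lemma box_eq: "box (\<gamma>::'n::finite \<Rightarrow>\<^sub>0 nat) = Abs_poly_mapping ` (PiE UNIV (\<lambda>j. {..Poly_Mapping.lookup \<gamma> j}))"
proof
  show "box \<gamma> \<subseteq> Abs_poly_mapping ` (PiE UNIV (\<lambda>j. {..Poly_Mapping.lookup \<gamma> j}))"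
  proof
    fix \<beta> assume "\<beta> \<in> box \<gamma>"
    then have "Poly_Mapping.lookup \<beta> \<in> PiE UNIV (\<lambda>j. {..Poly_Mapping.lookup \<gamma> j})"
      by (auto simp: box_def mle_def)
    then show "\<beta> \<in> Abs_poly_mapping ` (PiE UNIV (\<lambda>j. {..Poly_Mapping.lookup \<gamma> j}))"
      by (metis image_eqI lookup_inverse)
  qed
  show "Abs_poly_mapping ` (PiE UNIV (\<lambda>j. {..Poly_Mapping.lookup \<gamma> j})) \<subseteq> box \<gamma>"
    by (auto simp: box_def mle_def)
qed

lemma inj_Abs: "inj_on (Abs_poly_mapping :: ('n::finite \<Rightarrow> nat) \<Rightarrow> _) A"
  by (rule inj_onI) (metis finite lookup_Abs_poly_mapping)

lemma finite_box: "finite (box (\<gamma>::'n::finite \<Rightarrow>\<^sub>0 nat))"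
  unfolding box_eq by (intro finite_imageI finite_PiE) auto

lemma sum_box_prod:
  fixes h :: "'n::finite \<Rightarrow> nat \<Rightarrow> real"
  shows "(\<Sum>\<beta>\<in>box \<gamma>. \<Prod>j\<in>UNIV. h j (Poly_Mapping.lookup \<beta> j)) = (\<Prod>j\<in>UNIV. \<Sum>k\<le>Poly_Mapping.lookup \<gamma> j. h j k)"
proof -
  have "(\<Sum>\<beta>\<in>box \<gamma>. \<Prod>j\<in>UNIV. h j (Poly_Mapping.lookup \<beta> j))
     = (\<Sum>f\<in>PiE UNIV (\<lambda>j. {..Poly_Mapping.lookup \<gamma> j}). \<Prod>j\<in>UNIV. h j (Poly_Mapping.lookup (Abs_poly_mapping f) j))"
    unfolding box_eq by (rule sum.reindex[OF inj_Abs, unfolded comp_def])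
  also have "\<dots> = (\<Sum>f\<in>PiE UNIV (\<lambda>j. {..Poly_Mapping.lookup \<gamma> j}). \<Prod>j\<in>UNIV. h j (f j))"
    by simp
  also have "\<dots> = (\<Prod>j\<in>UNIV. \<Sum>k\<le>Poly_Mapping.lookup \<gamma> j. h j k)"
    by (rule prod_sum_PiE[symmetric]) auto
  finally show ?thesis .
qed


definition polyP :: "('n::finite \<Rightarrow>\<^sub>0 nat) \<Rightarrow> ('n \<Rightarrow> real poly) \<Rightarrow> 'n mpoly" where
  "polyP \<gamma> g = (\<Sum>\<beta>\<in>box \<gamma>. Poly_Mapping.single \<beta> (\<Prod>j\<in>UNIV. coeff (g j) (Poly_Mapping.lookup \<beta> j)))"

lemma lookup_polyP:
  "Poly_Mapping.lookup (polyP \<gamma> g) \<beta> = (if \<beta> \<in> box \<gamma> then (\<Prod>j\<in>UNIV. coeff (g j) (Poly_Mapping.lookup \<beta> j)) else 0)"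
  unfolding polyP_def lookup_sum by (simp add: lookup_single when_def finite_box)

lemma keys_polyP: "Poly_Mapping.keys (polyP \<gamma> g) \<subseteq> box \<gamma>"
  by (auto simp: in_keys_iff lookup_polyP split: if_splits)

definition hh :: "('n \<Rightarrow>\<^sub>0 nat) \<Rightarrow> ('n \<Rightarrow> real poly) \<Rightarrow> real^'n \<Rightarrow> 'n \<Rightarrow> nat \<Rightarrow> real" where
  "hh \<alpha> g x j k = (if Poly_Mapping.lookup \<alpha> j \<le> k then coeff (g j) k *
      (real (fact k) / real (fact (k - Poly_Mapping.lookup \<alpha> j))) * (x $ j) ^ (k - Poly_Mapping.lookup \<alpha> j) else 0)"

lemma prod_if_all:
  fixes P :: "'n::finite \<Rightarrow> bool" and f :: "'n \<Rightarrow> real"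
  shows "(\<Prod>j\<in>UNIV. if P j then f j else 0) = (if (\<forall>j. P j) then (\<Prod>j\<in>UNIV. f j) else 0)"
  by (auto intro: prod.cong)

lemma eval_pderivm_polyP:
  fixes \<alpha> \<gamma> :: "'n::finite \<Rightarrow>\<^sub>0 nat"
  shows "peval (pderivm \<alpha> (polyP \<gamma> g)) x = (\<Prod>j\<in>UNIV. \<Sum>k\<le>Poly_Mapping.lookup \<gamma> j. hh \<alpha> g x j k)"
proof -
  let ?P = "polyP \<gamma> g"
  let ?F = "\<lambda>\<beta>. if mle \<alpha> \<beta> then Poly_Mapping.lookup ?P \<beta> * (\<Prod>i\<in>UNIV. real (fact (Poly_Mapping.lookup \<beta> i)) / real (fact (Poly_Mapping.lookup \<beta> i - Poly_Mapping.lookup \<alpha> i))) * mono_eval (\<beta> - \<alpha>) x else 0"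
  have "peval (pderivm \<alpha> ?P) x = (\<Sum>\<beta>\<in>Poly_Mapping.keys ?P. ?F \<beta>)"
    unfolding pderivm_def peval_sum by (intro sum.cong) (auto simp: peval_single)
  also have "\<dots> = (\<Sum>\<beta>\<in>box \<gamma>. ?F \<beta>)"
    by (rule sum.mono_neutral_left) (use keys_polyP finite_box in \<open>auto simp: in_keys_iff\<close>)
  also have "\<dots> = (\<Sum>\<beta>\<in>box \<gamma>. \<Prod>j\<in>UNIV. hh \<alpha> g x j (Poly_Mapping.lookup \<beta> j))"
  proof (rule sum.cong)
    fix \<beta> assume b: "\<beta> \<in> box \<gamma>"
    show "?F \<beta> = (\<Prod>j\<in>UNIV. hh \<alpha> g x j (Poly_Mapping.lookup \<beta> j))"
    proof (cases "mle \<alpha> \<beta>")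
      case True
      have all: "\<forall>j. Poly_Mapping.lookup \<alpha> j \<le> Poly_Mapping.lookup \<beta> j" using True by (simp add: mle_def)
      have L: "Poly_Mapping.lookup ?P \<beta> = (\<Prod>j\<in>UNIV. coeff (g j) (Poly_Mapping.lookup \<beta> j))"
        using b by (simp add: lookup_polyP)
      have M: "mono_eval (\<beta> - \<alpha>) x = (\<Prod>j\<in>UNIV. (x $ j) ^ (Poly_Mapping.lookup \<beta> j - Poly_Mapping.lookup \<alpha> j))"
        by (simp add: mono_eval_def lookup_minus)
      show ?thesis unfolding hh_def prod_if_all if_P[OF all] if_P[OF True] L M
        by (simp only: prod.distrib)
    next
      case False
      have nall: "\<not> (\<forall>j. Poly_Mapping.lookup \<alpha> j \<le> Poly_Mapping.lookup \<beta> j)" using False by (simp add: mle_def)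
      show ?thesis unfolding hh_def prod_if_all if_not_P[OF nall] if_not_P[OF False] by (rule refl)
    qed
  qed simp
  also have "\<dots> = (\<Prod>j\<in>UNIV. \<Sum>k\<le>Poly_Mapping.lookup \<gamma> j. hh \<alpha> g x j k)"
    by (rule sum_box_prod)
  finally show ?thesis .
qed

lemma eval_diffop_polyP:
  fixes \<gamma> :: "'n::finite \<Rightarrow>\<^sub>0 nat"
  shows "peval (diffop q (polyP \<gamma> g)) x = (\<Sum>\<alpha>\<in>box \<gamma>. q \<alpha> * (\<Prod>j\<in>UNIV. \<Sum>k\<le>Poly_Mapping.lookup \<gamma> j. hh \<alpha> g x j k))"
proof -
  let ?P = "polyP \<gamma> g"
  let ?A = "{\<alpha>. \<exists>\<beta>\<in>Poly_Mapping.keys ?P. mle \<alpha> \<beta>}"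
  have sub: "?A \<subseteq> box \<gamma>"
  proof
    fix \<alpha> assume "\<alpha> \<in> ?A"
    then obtain \<beta> where b: "\<beta> \<in> Poly_Mapping.keys ?P" "mle \<alpha> \<beta>" by auto
    with keys_polyP have "mle \<beta> \<gamma>" by (auto simp: box_def)
    with b show "\<alpha> \<in> box \<gamma>" unfolding box_def mle_def by (auto intro: le_trans)
  qed
  have "peval (diffop q ?P) x = (\<Sum>\<alpha>\<in>?A. q \<alpha> * peval (pderivm \<alpha> ?P) x)"
    unfolding diffop_def peval_sum peval_pscale ..
  also have "\<dots> = (\<Sum>\<alpha>\<in>box \<gamma>. q \<alpha> * peval (pderivm \<alpha> ?P) x)"
  proof (rule sum.mono_neutral_left[OF finite_box sub], rule ballI)
    fix \<alpha> assume "\<alpha> \<in> box \<gamma> - ?A"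
    then have "pderivm \<alpha> ?P = 0" unfolding pderivm_def by (intro sum.neutral) auto
    then show "q \<alpha> * peval (pderivm \<alpha> ?P) x = 0" by simp
  qed
  finally show ?thesis by (simp add: eval_pderivm_polyP)
qed

lemma poly_sum_le:
  fixes p :: "real poly"
  assumes "degree p \<le> n"
  shows "poly p y = (\<Sum>k\<le>n. coeff p k * y ^ k)"
  unfolding poly_altdef
  by (rule sum.mono_neutral_left) (use assms in \<open>auto simp: coeff_eq_0\<close>)

lemma hh_zero:
  assumes "degree (g j) \<le> n"
  shows "(\<Sum>k\<le>n. hh 0 g x j k) = poly (g j) (x $ j)"
  using poly_sum_le[OF assms] by (simp add: hh_def)

lemma hh_top:
  "(\<Sum>k\<le>Poly_Mapping.lookup \<gamma> j. hh \<gamma> g x j k) = coeff (g j) (Poly_Mapping.lookup \<gamma> j) * real (fact (Poly_Mapping.lookup \<gamma> j))"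
proof -
  have "(\<Sum>k\<le>Poly_Mapping.lookup \<gamma> j. hh \<gamma> g x j k) = (\<Sum>k\<le>Poly_Mapping.lookup \<gamma> j. if k = Poly_Mapping.lookup \<gamma> j then coeff (g j) k * real (fact k) else 0)"
    by (intro sum.cong) (auto simp: hh_def)
  then show ?thesis by simp
qed


lemma key_test:
  fixes K :: "(real^'n::finite) set" and \<gamma> :: "'n \<Rightarrow>\<^sub>0 nat"
  assumes pres: "pos_preserver K (diffop q)"
    and IH: "\<forall>\<beta>\<in>box \<gamma>. \<beta> \<noteq> 0 \<and> \<beta> \<noteq> \<gamma> \<longrightarrow> q \<beta> = 0"
    and g0: "\<gamma> \<noteq> 0"
    and deg: "\<forall>j. degree (g j) \<le> Poly_Mapping.lookup \<gamma> j"
    and nonneg: "\<forall>x\<in>K. (\<Prod>j\<in>UNIV. poly (g j) (x $ j)) \<ge> 0"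
    and x0: "x0 \<in> K" and zero: "(\<Prod>j\<in>UNIV. poly (g j) (x0 $ j)) = 0"
  shows "q \<gamma> * (\<Prod>j\<in>UNIV. coeff (g j) (Poly_Mapping.lookup \<gamma> j) * real (fact (Poly_Mapping.lookup \<gamma> j))) \<ge> 0"
proof -
  let ?P = "polyP \<gamma> g"
  let ?E = "\<lambda>\<alpha>. (\<Prod>j\<in>UNIV. \<Sum>k\<le>Poly_Mapping.lookup \<gamma> j. hh \<alpha> g x0 j k)"
  have pe: "peval ?P x = (\<Prod>j\<in>UNIV. poly (g j) (x $ j))" for x
  proof -
    have "peval ?P x = peval (pderivm 0 ?P) x" by (simp add: pderivm_zero)
    also have "\<dots> = (\<Prod>j\<in>UNIV. \<Sum>k\<le>Poly_Mapping.lookup \<gamma> j. hh 0 g x j k)"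
      by (rule eval_pderivm_polyP)
    also have "\<dots> = (\<Prod>j\<in>UNIV. poly (g j) (x $ j))"
      using deg by (intro prod.cong refl hh_zero) auto
    finally show ?thesis .
  qed
  have "\<forall>x\<in>K. peval ?P x \<ge> 0" using nonneg pe by simp
  with pres x0 have ge: "peval (diffop q ?P) x0 \<ge> 0" unfolding pos_preserver_def by blast
  have mem: "0 \<in> box \<gamma>" "\<gamma> \<in> box \<gamma>" by (auto simp: box_def mle_def)
  have "peval (diffop q ?P) x0 = (\<Sum>\<alpha>\<in>box \<gamma>. q \<alpha> * ?E \<alpha>)"
    by (rule eval_diffop_polyP)
  also have "\<dots> = (\<Sum>\<alpha>\<in>{0, \<gamma>}. q \<alpha> * ?E \<alpha>)"
    by (rule sum.mono_neutral_right[OF finite_box]) (use mem IH in auto)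
  also have "\<dots> = q 0 * ?E 0 + q \<gamma> * ?E \<gamma>"
    using g0 by (subst sum.insert) auto
  also have "?E 0 = 0"
    using deg zero by (subst prod.cong[OF refl hh_zero]) auto
  also have "?E \<gamma> = (\<Prod>j\<in>UNIV. coeff (g j) (Poly_Mapping.lookup \<gamma> j) * real (fact (Poly_Mapping.lookup \<gamma> j)))"
    by (simp add: hh_top)
  finally show ?thesis using ge by simp
qed


lemma coeff_lin_pow: "coeff ([:a, 1:] ^ n) n = (1::real)"
proof -
  have "coeff ([:a, 1:] ^ n) n = lead_coeff ([:a, 1:] ^ n)" by (simp add: degree_linear_power)
  also have "\<dots> = 1" by (simp add: lead_coeff_power)
  finally show ?thesis .
qed

lemma step:
  fixes K :: "(real^'n::finite) set" and \<gamma> :: "'n \<Rightarrow>\<^sub>0 nat"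
  assumes pres: "pos_preserver K (diffop q)"
    and IH: "\<forall>\<beta>\<in>box \<gamma>. \<beta> \<noteq> 0 \<and> \<beta> \<noteq> \<gamma> \<longrightarrow> q \<beta> = 0"
    and g0: "\<gamma> \<noteq> 0"
    and amin: "\<And>j. amin j \<in> K \<and> (\<forall>y\<in>K. amin j $ j \<le> y $ j)"
    and amax: "\<And>j. amax j \<in> K \<and> (\<forall>y\<in>K. y $ j \<le> amax j $ j)"
  shows "q \<gamma> = 0"
proof -
  define m where "m j = amin j $ j" for j
  define M where "M j = amax j $ j" for j
  obtain i where i: "Poly_Mapping.lookup \<gamma> i \<noteq> 0"
    using g0 by (metis lookup_zero poly_mapping_eqI)
  define G where "G j = [:- m j, 1:] ^ Poly_Mapping.lookup \<gamma> j" for j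
  have polyG: "poly (G j) y = (y - m j) ^ Poly_Mapping.lookup \<gamma> j" for j y
    by (simp add: G_def)
  have mle: "m j \<le> y $ j" if "y \<in> K" for j y using amin that m_def by auto
  have Mge: "y $ j \<le> M j" if "y \<in> K" for j y using amax that M_def by auto
  have fpos: "(\<Prod>j\<in>UNIV. real (fact (Poly_Mapping.lookup \<gamma> j))) > 0"
    by (intro prod_pos) auto
  have "q \<gamma> * (\<Prod>j\<in>UNIV. coeff (G j) (Poly_Mapping.lookup \<gamma> j) * real (fact (Poly_Mapping.lookup \<gamma> j))) \<ge> 0"
  proof (rule key_test[OF pres IH g0])
    show "\<forall>j. degree (G j) \<le> Poly_Mapping.lookup \<gamma> j" by (simp add: G_def degree_linear_power)
    show "\<forall>x\<in>K. (\<Prod>j\<in>UNIV. poly (G j) (x $ j)) \<ge> 0"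
      using mle by (auto simp: polyG intro!: prod_nonneg)
    show "amin i \<in> K" using amin by blast
    show "(\<Prod>j\<in>UNIV. poly (G j) (amin i $ j)) = 0"
      using i by (intro prod_zero) (auto simp: polyG m_def intro!: bexI[where x=i])
  qed
  then have A: "q \<gamma> \<ge> 0" using fpos by (simp add: G_def coeff_lin_pow zero_le_mult_iff)
  define H where "H = [:- m i, 1:] ^ (Poly_Mapping.lookup \<gamma> i - 1) * [:M i, -1:]"
  define g where "g = G(i := H)"
  have degH: "degree H \<le> Poly_Mapping.lookup \<gamma> i"
  proof -
    have "degree H \<le> degree ([:- m i, 1:] ^ (Poly_Mapping.lookup \<gamma> i - 1)) + degree [:M i, -1:]"
      unfolding H_def by (rule degree_mult_le)
    also have "\<dots> = Poly_Mapping.lookup \<gamma> i" using i by (simp add: degree_linear_power)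
    finally show ?thesis .
  qed
  have coeffH: "coeff H (Poly_Mapping.lookup \<gamma> i) = -1"
  proof -
    have "coeff H (degree ([:- m i, 1:] ^ (Poly_Mapping.lookup \<gamma> i - 1)) + degree [:M i, -1:]) = -1"
      unfolding H_def coeff_mult_degree_sum by (simp add: degree_linear_power coeff_lin_pow)
    moreover have "degree ([:- m i, 1:] ^ (Poly_Mapping.lookup \<gamma> i - 1)) + degree [:M i, -1:] = Poly_Mapping.lookup \<gamma> i"
      using i by (simp add: degree_linear_power)
    ultimately show ?thesis by simp
  qed
  have polyH: "poly H y = (y - m i) ^ (Poly_Mapping.lookup \<gamma> i - 1) * (M i - y)" for y
    by (simp add: H_def algebra_simps)
  define x0 where "x0 = (if Poly_Mapping.lookup \<gamma> i \<ge> 2 then amin i else amax i)"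
  have "q \<gamma> * (\<Prod>j\<in>UNIV. coeff (g j) (Poly_Mapping.lookup \<gamma> j) * real (fact (Poly_Mapping.lookup \<gamma> j))) \<ge> 0"
  proof (rule key_test[OF pres IH g0])
    show "\<forall>j. degree (g j) \<le> Poly_Mapping.lookup \<gamma> j" using degH by (simp add: g_def G_def degree_linear_power)
    show "\<forall>x\<in>K. (\<Prod>j\<in>UNIV. poly (g j) (x $ j)) \<ge> 0"
      using mle Mge by (auto simp: g_def polyG polyH intro!: prod_nonneg mult_nonneg_nonneg)
    show "x0 \<in> K" using amin amax by (simp add: x0_def)
    have "poly (g i) (x0 $ i) = 0"
    proof (cases "Poly_Mapping.lookup \<gamma> i \<ge> 2")
      case True
      then show ?thesis by (simp add: g_def polyH x0_def m_def)
    next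
      case False
      then show ?thesis by (simp add: g_def polyH x0_def M_def)
    qed
    then show "(\<Prod>j\<in>UNIV. poly (g j) (x0 $ j)) = 0"
      by (intro prod_zero) (auto intro!: bexI[where x=i])
  qed
  moreover have "(\<Prod>j\<in>UNIV. coeff (g j) (Poly_Mapping.lookup \<gamma> j) * real (fact (Poly_Mapping.lookup \<gamma> j)))
     = (\<Prod>j\<in>UNIV. (if j = i then -1 else 1) * real (fact (Poly_Mapping.lookup \<gamma> j)))"
    by (intro prod.cong refl) (auto simp: g_def coeffH G_def coeff_lin_pow)
  moreover have "\<dots> = - (\<Prod>j\<in>UNIV. real (fact (Poly_Mapping.lookup \<gamma> j)))"
    by (simp add: prod.distrib prod.delta)
  ultimately have "q \<gamma> * (- (\<Prod>j\<in>UNIV. real (fact (Poly_Mapping.lookup \<gamma> j)))) \<ge> 0" by simp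
  then have "q \<gamma> \<le> 0" using fpos by (simp add: mult_le_0_iff)
  with A show ?thesis by simp
qed


lemma pscale_zero_left[simp]: "pscale 0 p = 0"
  by (rule poly_mapping_eqI) simp

lemma pscale_zero_right[simp]: "pscale c 0 = 0"
  by (rule poly_mapping_eqI) simp

lemma diffop_const:
  fixes q :: "('n::finite \<Rightarrow>\<^sub>0 nat) \<Rightarrow> real"
  assumes "\<forall>\<gamma>. \<gamma> \<noteq> 0 \<longrightarrow> q \<gamma> = 0"
  shows "diffop q p = pscale (q 0) p"
proof -
  let ?A = "{\<alpha>. \<exists>\<beta>\<in>Poly_Mapping.keys p. mle \<alpha> \<beta>}"
  have fin: "finite ?A"
    by (rule finite_subset[of _ "\<Union>\<beta>\<in>Poly_Mapping.keys p. box \<beta>"]) (use finite_box in \<open>auto simp: box_def\<close>)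
  have "diffop q p = (\<Sum>\<alpha>\<in>?A. if \<alpha> = 0 then pscale (q 0) p else 0)"
    unfolding diffop_def using assms by (intro sum.cong refl) (auto simp: pderivm_zero)
  also have "\<dots> = (if 0 \<in> ?A then pscale (q 0) p else 0)"
    using fin by (simp add: sum.delta)
  also have "\<dots> = pscale (q 0) p"
  proof (cases "p = 0")
    case False
    then obtain \<beta> where "\<beta> \<in> Poly_Mapping.keys p" by (metis keys_eq_empty ex_in_conv)
    then have "0 \<in> ?A" by (auto simp: mle_def)
    then show ?thesis by simp
  qed simp
  finally show ?thesis .
qed

theorem corollary4p13:
  fixes K :: "(real^'n::finite) set" and q :: "('n \<Rightarrow>\<^sub>0 nat) \<Rightarrow> real"
  assumes "K \<noteq> {}" and "compact K"
    and "pos_preserver K (diffop q)"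
  shows "\<exists>c\<ge>0. \<forall>p. diffop q p = pscale c p"
proof -
  have cont: "continuous_on K (\<lambda>x. x $ j)" for j by (intro continuous_intros)
  have "\<forall>j. \<exists>a\<in>K. \<forall>y\<in>K. a $ j \<le> y $ j"
    using continuous_attains_inf[OF assms(2) assms(1) cont] by blast
  then obtain amin where amin: "\<And>j. amin j \<in> K \<and> (\<forall>y\<in>K. amin j $ j \<le> y $ j)" by metis
  have "\<forall>j. \<exists>a\<in>K. \<forall>y\<in>K. y $ j \<le> a $ j"
    using continuous_attains_sup[OF assms(2) assms(1) cont] by blast
  then obtain amax where amax: "\<And>j. amax j \<in> K \<and> (\<forall>y\<in>K. y $ j \<le> amax j $ j)" by metis
  have main: "\<forall>\<gamma>. (\<Sum>j\<in>UNIV. Poly_Mapping.lookup \<gamma> j) = n \<longrightarrow> \<gamma> \<noteq> 0 \<longrightarrow> q \<gamma> = 0" for n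
  proof (induction n rule: less_induct)
    case (less n)
    show ?case
    proof (intro allI impI)
      fix \<gamma> :: "'n \<Rightarrow>\<^sub>0 nat"
      assume n: "(\<Sum>j\<in>UNIV. Poly_Mapping.lookup \<gamma> j) = n" and g0: "\<gamma> \<noteq> 0"
      have IH: "\<forall>\<beta>\<in>box \<gamma>. \<beta> \<noteq> 0 \<and> \<beta> \<noteq> \<gamma> \<longrightarrow> q \<beta> = 0"
      proof (intro ballI impI)
        fix \<beta> assume b: "\<beta> \<in> box \<gamma>" and bb: "\<beta> \<noteq> 0 \<and> \<beta> \<noteq> \<gamma>"
        then obtain j where j: "Poly_Mapping.lookup \<beta> j \<noteq> Poly_Mapping.lookup \<gamma> j"
          by (metis poly_mapping_eqI)
        have le: "\<forall>j. Poly_Mapping.lookup \<beta> j \<le> Poly_Mapping.lookup \<gamma> j"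
          using b by (simp add: box_def mle_def)
        have "(\<Sum>j\<in>UNIV. Poly_Mapping.lookup \<beta> j) < (\<Sum>j\<in>UNIV. Poly_Mapping.lookup \<gamma> j)"
        proof (rule sum_strict_mono_ex1)
          show "\<forall>x\<in>UNIV. Poly_Mapping.lookup \<beta> x \<le> Poly_Mapping.lookup \<gamma> x" using le by blast
          have "Poly_Mapping.lookup \<beta> j < Poly_Mapping.lookup \<gamma> j" using le j by (metis le_neq_implies_less)
          then show "\<exists>a\<in>UNIV. Poly_Mapping.lookup \<beta> a < Poly_Mapping.lookup \<gamma> a" by blast
        qed simp
        then show "q \<beta> = 0" using less n bb by blast
      qed
      show "q \<gamma> = 0" by (rule step[OF assms(3) IH g0 amin amax])
    qed
  qed
  have allz: "\<forall>\<gamma>. \<gamma> \<noteq> 0 \<longrightarrow> q \<gamma> = 0" using main by blast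
  have "q 0 \<ge> 0"
  proof -
    obtain x where x: "x \<in> K" using assms(1) by blast
    have one: "peval (Poly_Mapping.single 0 1) y = 1" for y
      by (simp only: peval_single) (simp add: mono_eval_def)
    have "\<forall>y\<in>K. peval (Poly_Mapping.single 0 1) y \<ge> 0"
      by (simp only: one) simp
    then have "\<forall>y\<in>K. peval (diffop q (Poly_Mapping.single 0 1)) y \<ge> 0"
      using assms(3) unfolding pos_preserver_def by blast
    then have "peval (pscale (q 0) (Poly_Mapping.single 0 1)) x \<ge> 0"
      using x diffop_const[OF allz] by simp
    then show ?thesis by (simp only: peval_pscale one mult_1_right)
  qed
  then show ?thesis using diffop_const[OF allz] by blast
qed

end
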